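(* In any execution of Algorithm 1, no two correct processes mbrb-deliver different app-messages from a process $p_i$ with the same sequence number $sn$; i.e., if correct processes mbrb-deliver $(m,sn,i)$ and $(m',sn,i)$ respectively, then $m=m'$.
   Context: System model. There are $n$ asynchronous processes $p_1,\dots,p_n$ with distinct known identities. Up to $t$ are Byzantine (arbitrary behavior); the rest are correct; $c$ is the number of correct processes. The network is fully connected, asynchronous, never corrupts/duplicates/creates messages; "broadcast $M$" sends $M$ to all $n$ processes; a message adversary may suppress, per broadcast by a correct process, up to $d<c$ copies addressed to correct processes. Signatures are unforgeable (only $p_k$ can produce a valid signature by $p_k$) and public keys are known. It is assumed $n>3t+2d$. Algorithm 1 (code for $p_i$). Each process stores, for each triplet $(m,sn,j)$, a set of saved valid signatures of that triplet, at most one per signer. On $\mathrm{mbrb\_broadcast}(m,sn)$: $p_i$ saves its own signature of $(m,sn,i)$ and broadcasts $\mathrm{BUNDLE}(m,sn,i,S)$, $S$ the saved signatures for $(m,sn,i)$. On receiving $\mathrm{BUNDLE}(m,sn,j,sigs)$: if $p_i$ has not already mbrb-delivered some $(-,sn,j)$ and $sigs$ contains a valid signature of $(m,sn,j)$ by $p_j$, then: (1) save all new valid signatures of $(m,sn,j)$ in $sigs$; (2) if $p_i$ has not yet signed any $(-,sn,j)$, save its own signature of $(m,sn,j)$ and broadcast $\mathrm{BUNDLE}(m,sn,j,\text{all saved signatures for }(m,sn,j))$; (3) if strictly more than $\frac{n+t}{2}$ signatures for $(m,sn,j)$ are saved, broadcast $\mathrm{BUNDLE}(m,sn,j,\text{all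 saved signatures})$ and mbrb-deliver $(m,sn,j)$. A correct process never uses the same sequence number twice in mbrb-broadcast. *)

theory Defs
  imports Main "HOL-Library.Multiset"
begin

text \<open>Executions of Algorithm 1 (signature-based MBRB) as a global transition system.
Processes are the identities 1..n; B is the set of Byzantine processes.
A triplet (m, sn, j) is an app-message m with sequence number sn from p_j.
A signature is modelled symbolically: Sig k x is the signature of triplet x by p_k.
Unforgeability: a Byzantine process can only put into its messages signatures by
Byzantine signers (or by non-existent identities, which are invalid anyway) or
signatures that some Byzantine process has previously received.\<close>

type_synonym 'm triplet = "'m \<times> nat \<times> nat"

datatype 'm sig = Sig nat "'m triplet"

datatype 'm msg = BUNDLE 'm nat nat "'m sig set"

fun sigs_of :: "'m msg \<Rightarrow> 'm sig set" where
  "sigs_of (BUNDLE m sn j S) = S"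

definition valid_sig :: "nat \<Rightarrow> 'm sig \<Rightarrow> 'm triplet \<Rightarrow> bool" where
  "valid_sig n \<sigma> x \<longleftrightarrow> (\<exists>k\<in>{1..n}. \<sigma> = Sig k x)"

text \<open>Global state. The local fields are only meaningful for correct processes.
  net is the multiset of in-transit copies (sender, destination, message).\<close>
record 'm st =
  signed    :: "nat \<Rightarrow> 'm triplet set"
  saved     :: "nat \<Rightarrow> 'm triplet \<Rightarrow> 'm sig set"
  delivered :: "nat \<Rightarrow> 'm triplet set"
  used_sn   :: "nat \<Rightarrow> nat set"
  net       :: "(nat \<times> nat \<times> 'm msg) multiset"
  byz_known :: "'m sig set"

definition init_st :: "'m st" where
  "init_st = \<lparr> signed = (\<lambda>_. {}), saved = (\<lambda>_ _. {}), delivered = (\<lambda>_. {}),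
              used_sn = (\<lambda>_. {}), net = {#}, byz_known = {} \<rparr>"

text \<open>Broadcast of M by p_i: one copy to every process, except the copies addressed to
  the set D of correct processes suppressed by the message adversary.\<close>
definition bcast :: "nat \<Rightarrow> nat set \<Rightarrow> nat \<Rightarrow> 'm msg \<Rightarrow> (nat \<times> nat \<times> 'm msg) multiset" where
  "bcast n D i M = mset_set ((\<lambda>k. (i, k, M)) ` ({1..n} - D))"

definition adv_ok :: "nat \<Rightarrow> nat set \<Rightarrow> nat \<Rightarrow> nat set \<Rightarrow> bool" where
  "adv_ok n B d D \<longleftrightarrow> D \<subseteq> {1..n} - B \<and> card D \<le> d"

inductive step :: "nat \<Rightarrow> nat \<Rightarrow> nat \<Rightarrow> nat set \<Rightarrow> 'm st \<Rightarrow> 'm st \<Rightarrow> bool"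
  for n t d :: nat and B :: "nat set" where
  mbrb_broadcast:
  "\<lbrakk> i \<in> {1..n} - B; sn \<notin> used_sn s i; adv_ok n B d D;
     S = insert (Sig i (m, sn, i)) (saved s i (m, sn, i));
     s' = s\<lparr> used_sn := (used_sn s)(i := insert sn (used_sn s i)),
             signed := (signed s)(i := insert (m, sn, i) (signed s i)),
             saved := (saved s)(i := (saved s i)((m, sn, i) := S)),
             net := net s + bcast n D i (BUNDLE m sn i S) \<rparr> \<rbrakk>
   \<Longrightarrow> step n t d B s s'"
| recv_ignore:
  "\<lbrakk> i \<in> {1..n} - B; (p, i, BUNDLE m sn j sigs) \<in># net s;
     (\<exists>m'. (m', sn, j) \<in> delivered s i) \<or> \<not> (j \<in> {1..n} \<and> Sig j (m, sn, j) \<in> sigs);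
     s' = s\<lparr> net := net s - {#(p, i, BUNDLE m sn j sigs)#} \<rparr> \<rbrakk>
   \<Longrightarrow> step n t d B s s'"
| recv_accept:
  "\<lbrakk> i \<in> {1..n} - B; (p, i, BUNDLE m sn j sigs) \<in># net s;
     \<not> (\<exists>m'. (m', sn, j) \<in> delivered s i); j \<in> {1..n}; Sig j (m, sn, j) \<in> sigs;
     adv_ok n B d D1; adv_ok n B d D2;
     x = (m, sn, j);
     S1 = saved s i x \<union> {\<sigma> \<in> sigs. valid_sig n \<sigma> x};
     sign = (\<not> (\<exists>m'. (m', sn, j) \<in> signed s i));
     S2 = (if sign then insert (Sig i x) S1 else S1);
     dlv = (2 * card S2 > n + t);
     s' = s\<lparr> signed := (signed s)(i := (if sign then insert x (signed s i) else signed s i)),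
             saved := (saved s)(i := (saved s i)(x := S2)),
             delivered := (delivered s)(i := (if dlv then insert x (delivered s i) else delivered s i)),
             net := net s - {#(p, i, BUNDLE m sn j sigs)#}
                    + (if sign then bcast n D1 i (BUNDLE m sn j S2) else {#})
                    + (if dlv then bcast n D2 i (BUNDLE m sn j S2) else {#}) \<rparr> \<rbrakk>
   \<Longrightarrow> step n t d B s s'"
| byz_send:
  "\<lbrakk> b \<in> B; k \<in> {1..n};
     \<forall>\<sigma>\<in>sigs_of M. \<forall>q x. \<sigma> = Sig q x \<longrightarrow> q \<in> B \<or> q \<notin> {1..n} \<or> \<sigma> \<in> byz_known s;
     s' = s\<lparr> net := net s + {#(b, k, M)#} \<rparr> \<rbrakk>
   \<Longrightarrow> step n t d B s s'"
| byz_recv: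
  "\<lbrakk> b \<in> B; (p, b, M) \<in># net s;
     s' = s\<lparr> net := net s - {#(p, b, M)#}, byz_known := byz_known s \<union> sigs_of M \<rparr> \<rbrakk>
   \<Longrightarrow> step n t d B s s'"

inductive reach :: "nat \<Rightarrow> nat \<Rightarrow> nat \<Rightarrow> nat set \<Rightarrow> 'm st \<Rightarrow> bool"
  for n t d :: nat and B :: "nat set" where
  reach_init: "reach n t d B init_st"
| reach_step: "reach n t d B s \<Longrightarrow> step n t d B s s' \<Longrightarrow> reach n t d B s'"

end

theory Submission
  imports Defs
begin

definition inv :: "nat \<Rightarrow> nat \<Rightarrow> nat set \<Rightarrow> 'm st \<Rightarrow> bool" where
 "inv n t B s \<longleftrightarrow>
 (\<forall>k\<in>{1..n}-B. \<forall>y. saved s k y \<subseteq> (\<lambda>q. Sig q y) ` {1..n}) \<and>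
 (\<forall>k\<in>{1..n}-B. \<forall>q\<in>{1..n}-B. \<forall>y. Sig q y \<in> saved s k y \<longrightarrow> y \<in> signed s q) \<and>
 (\<forall>p k M q y. (p,k,M) \<in># net s \<longrightarrow> q \<in> {1..n}-B \<longrightarrow> Sig q y \<in> sigs_of M \<longrightarrow> y \<in> signed s q) \<and>
 (\<forall>q\<in>{1..n}-B. \<forall>y. Sig q y \<in> byz_known s \<longrightarrow> y \<in> signed s q) \<and>
 (\<forall>k\<in>{1..n}-B. \<forall>a b sn j. (a,sn,j)\<in>signed s k \<longrightarrow> (b,sn,j)\<in>signed s k \<longrightarrow> a=b) \<and>
 (\<forall>k\<in>{1..n}-B. \<forall>a sn. (a,sn,k)\<in>signed s k \<longrightarrow> sn \<in> used_sn s k) \<and>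
 (\<forall>k\<in>{1..n}-B. \<forall>x. x \<in> delivered s k \<longrightarrow> n+t < 2*card(saved s k x))"

lemma in_bcast: "x \<in># bcast n D i M \<Longrightarrow> \<exists>k. x = (i,k,M)"
  unfolding bcast_def by (subst (asm) finite_set_mset_mset_set) auto

lemma inv_init: "inv n t B init_st"
  by (simp add: inv_def init_st_def)

lemma inv_step:
  assumes "step n t d B s s'" "inv n t B s"
  shows "inv n t B s'"
  using assms
proof (induction rule: step.induct)
  case (mbrb_broadcast i sn s D S m s')
  show ?case unfolding inv_def
  proof (intro conjI)
    show "\<forall>k\<in>{1..n}-B. \<forall>y. saved s' k y \<subseteq> (\<lambda>q. Sig q y) ` {1..n}"
      using mbrb_broadcast by (auto simp: inv_def)
    show "\<forall>k\<in>{1..n}-B. \<forall>q\<in>{1..n}-B. \<forall>y. Sig q y \<in> saved s' k y \<longrightarrow> y \<in> signed s' q"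
    proof (intro ballI allI impI)
      fix k q y assume k: "k \<in> {1..n}-B" and q: "q\<in>{1..n}-B" and h: "Sig q y \<in> saved s' k y"
      have "Sig q y \<in> saved s k y \<or> (q = i \<and> y = (m,sn,i))"
        using h mbrb_broadcast by (auto split: if_splits)
      then show "y \<in> signed s' q"
      proof
        assume "Sig q y \<in> saved s k y"
        then have "y \<in> signed s q" using mbrb_broadcast(6) k q unfolding inv_def by blast
        then show ?thesis using mbrb_broadcast by auto
      qed (use mbrb_broadcast in auto)
    qed
    show "\<forall>p k M q y. (p,k,M) \<in># net s' \<longrightarrow> q \<in> {1..n}-B \<longrightarrow> Sig q y \<in> sigs_of M \<longrightarrow> y \<in> signed s' q"
    proof (intro allI impI)
      fix p' k M q y assume h: "(p',k,M) \<in># net s'" and q: "q \<in> {1..n}-B" and sy: "Sig q y \<in> sigs_of M"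
      have "(p',k,M) \<in># net s \<or> M = BUNDLE m sn i S"
        using h mbrb_broadcast by (auto dest!: in_bcast)
      then show "y \<in> signed s' q"
      proof
        assume "(p',k,M) \<in># net s"
        then have "y \<in> signed s q" using mbrb_broadcast(6) q sy unfolding inv_def by blast
        then show ?thesis using mbrb_broadcast by auto
      next
        assume M: "M = BUNDLE m sn i S"
        then have "Sig q y \<in> saved s i (m,sn,i) \<or> (q = i \<and> y = (m,sn,i))"
          using sy mbrb_broadcast by auto
        then show ?thesis
        proof
          assume "Sig q y \<in> saved s i (m,sn,i)"
          moreover have "saved s i (m,sn,i) \<subseteq> (\<lambda>q. Sig q (m,sn,i)) ` {1..n}"
            using spec[OF bspec[OF conjunct1[OF mbrb_broadcast(6)[unfolded inv_def]] mbrb_broadcast(1)], of "(m,sn,i)"] .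
          ultimately have "y = (m,sn,i)" "Sig q y \<in> saved s i y" by auto
          then have "y \<in> signed s q" using mbrb_broadcast(1,6) q unfolding inv_def by blast
          then show ?thesis using mbrb_broadcast by auto
        qed (use mbrb_broadcast in auto)
      qed
    qed
    show "\<forall>q\<in>{1..n}-B. \<forall>y. Sig q y \<in> byz_known s' \<longrightarrow> y \<in> signed s' q"
      using mbrb_broadcast by (auto simp: inv_def)
    show "\<forall>k\<in>{1..n}-B. \<forall>a b sn j. (a,sn,j)\<in>signed s' k \<longrightarrow> (b,sn,j)\<in>signed s' k \<longrightarrow> a=b"
      using mbrb_broadcast by (auto simp: inv_def)
    show "\<forall>k\<in>{1..n}-B. \<forall>a sn. (a,sn,k)\<in>signed s' k \<longrightarrow> sn \<in> used_sn s' k"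
      using mbrb_broadcast by (auto simp: inv_def)
    show "\<forall>k\<in>{1..n}-B. \<forall>x. x \<in> delivered s' k \<longrightarrow> n+t < 2*card(saved s' k x)"
    proof (intro ballI allI impI)
      fix k x assume k: "k \<in> {1..n}-B" and x: "x \<in> delivered s' k"
      have xd: "x \<in> delivered s k" using mbrb_broadcast(5) x by simp
      have D: "\<forall>k\<in>{1..n}-B. \<forall>x. x \<in> delivered s k \<longrightarrow> n+t < 2*card(saved s k x)"
        using mbrb_broadcast(6) unfolding inv_def by (elim conjE) assumption
      have del: "n+t < 2*card(saved s k x)" using D k xd by blast
      show "n+t < 2*card(saved s' k x)"
      proof (cases "k = i \<and> x = (m,sn,i)")
        case True
        have fin: "finite (saved s i (m,sn,i))"
          using spec[OF bspec[OF conjunct1[OF mbrb_broadcast(6)[unfolded inv_def]] mbrb_broadcast(1)], of "(m,sn,i)"]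
          by (rule finite_subset) simp
        have "card (saved s k x) \<le> card (saved s' k x)"
          using True mbrb_broadcast fin by (auto intro: card_mono)
        then show ?thesis using del by linarith
      next
        case False
        then show ?thesis using del mbrb_broadcast by auto
      qed
    qed
  qed
next
  case (recv_ignore i p m sn j sigs s s')
  show ?case using recv_ignore unfolding inv_def
    by (auto dest: in_diffD)
next
  case (recv_accept i p m sn j sigs s D1 D2 x S1 sign S2 dlv s')
  have I: "inv n t B s" by fact
  have S2sub: "S2 \<subseteq> (\<lambda>q. Sig q x) ` {1..n}"
    using recv_accept I by (auto simp: inv_def valid_sig_def)
  have S1sub: "saved s i x \<subseteq> S2" using recv_accept by auto
  have sv: "\<And>k y. saved s' k y = (if k = i \<and> y = x then S2 else saved s k y)"
    using recv_accept by simp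
  have sigok: "\<And>q y. q \<in> {1..n}-B \<Longrightarrow> Sig q y \<in> S2 \<Longrightarrow> y \<in> signed s' q"
  proof -
    fix q y assume q: "q \<in> {1..n}-B" and sy: "Sig q y \<in> S2"
    have yx: "y = x" using sy S2sub by auto
    have "y \<in> signed s q \<or> (q = i \<and> y = x \<and> sign)"
    proof (cases "Sig q y \<in> saved s i x")
      case True
      have "\<forall>k\<in>{1..n}-B. \<forall>q\<in>{1..n}-B. \<forall>y. Sig q y \<in> saved s k y \<longrightarrow> y \<in> signed s q"
        using I unfolding inv_def by blast
      then have "y \<in> signed s q" using True q recv_accept(1) yx by blast
      then show ?thesis by blast
    next
      case False
      show ?thesis
      proof (cases "Sig q y \<in> sigs")
        case True then show ?thesis using I q recv_accept(2) unfolding inv_def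
          by (metis sigs_of.simps)
      next
        case False2: False
        then show ?thesis using False sy recv_accept yx by (auto split: if_splits)
      qed
    qed
    then show "y \<in> signed s' q" using recv_accept by auto
  qed
  show ?case unfolding inv_def
  proof (intro conjI)
    show "\<forall>k\<in>{1..n}-B. \<forall>y. saved s' k y \<subseteq> (\<lambda>q. Sig q y) ` {1..n}"
      using recv_accept I S2sub by (auto simp: inv_def)
    show "\<forall>k\<in>{1..n}-B. \<forall>q\<in>{1..n}-B. \<forall>y. Sig q y \<in> saved s' k y \<longrightarrow> y \<in> signed s' q"
    proof (intro ballI allI impI)
      fix k q y assume k: "k \<in> {1..n}-B" and q: "q\<in>{1..n}-B" and h: "Sig q y \<in> saved s' k y"
      show "y \<in> signed s' q"
      proof (cases "k = i \<and> y = x")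
        case True then show ?thesis using h sigok q recv_accept by auto
      next
        case False
        then have "Sig q y \<in> saved s k y" using h sv by auto
        moreover have "\<forall>k\<in>{1..n}-B. \<forall>q\<in>{1..n}-B. \<forall>y. Sig q y \<in> saved s k y \<longrightarrow> y \<in> signed s q"
          using I unfolding inv_def by (elim conjE) assumption
        ultimately have "y \<in> signed s q" using k q by blast
        then show ?thesis using recv_accept by auto
      qed
    qed
    show "\<forall>p k M q y. (p,k,M) \<in># net s' \<longrightarrow> q \<in> {1..n}-B \<longrightarrow> Sig q y \<in> sigs_of M \<longrightarrow> y \<in> signed s' q"
    proof (intro allI impI)
      fix p' k M q y assume h: "(p',k,M) \<in># net s'" and q: "q \<in> {1..n}-B" and sy: "Sig q y \<in> sigs_of M"
      have "(p',k,M) \<in># net s \<or> M = BUNDLE m sn j S2"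
        using h recv_accept by (auto split: if_splits dest: in_diffD dest!: in_bcast)
      then show "y \<in> signed s' q"
      proof
        assume "(p',k,M) \<in># net s"
        moreover have "\<forall>p k M q y. (p,k,M) \<in># net s \<longrightarrow> q \<in> {1..n}-B \<longrightarrow> Sig q y \<in> sigs_of M \<longrightarrow> y \<in> signed s q"
          using I unfolding inv_def by (elim conjE) assumption
        ultimately have "y \<in> signed s q" using q sy by blast
        then show ?thesis using recv_accept by auto
      next
        assume "M = BUNDLE m sn j S2"
        then show ?thesis using sigok q sy by auto
      qed
    qed
    show "\<forall>q\<in>{1..n}-B. \<forall>y. Sig q y \<in> byz_known s' \<longrightarrow> y \<in> signed s' q"
      using recv_accept I by (auto simp: inv_def)
    show "\<forall>k\<in>{1..n}-B. \<forall>a b sn j. (a,sn,j)\<in>signed s' k \<longrightarrow> (b,sn,j)\<in>signed s' k \<longrightarrow> a=b"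
      using recv_accept I by (auto simp: inv_def split: if_splits)
    show "\<forall>k\<in>{1..n}-B. \<forall>a sn. (a,sn,k)\<in>signed s' k \<longrightarrow> sn \<in> used_sn s' k"
    proof (intro ballI allI impI)
      fix k a sn' assume k: "k \<in> {1..n}-B" and h: "(a,sn',k)\<in>signed s' k"
      have F: "\<forall>k\<in>{1..n}-B. \<forall>a sn. (a,sn,k)\<in>signed s k \<longrightarrow> sn \<in> used_sn s k"
        using I unfolding inv_def by (elim conjE) assumption
      have N: "\<forall>p k M q y. (p,k,M) \<in># net s \<longrightarrow> q \<in> {1..n}-B \<longrightarrow> Sig q y \<in> sigs_of M \<longrightarrow> y \<in> signed s q"
        using I unfolding inv_def by (elim conjE) assumption
      have "(a,sn',k) \<in> signed s k"
      proof (cases "k = i \<and> sign \<and> (a,sn',k) = x")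
        case True
        then have "j = i" "x = (m,sn,i)" using recv_accept by auto
        then have "(m,sn,j) \<in> signed s j"
          using N recv_accept(1,2,5) by fastforce
        then show ?thesis using True recv_accept \<open>j = i\<close> by auto
      next
        case False
        then show ?thesis using h recv_accept by (auto split: if_splits)
      qed
      then show "sn' \<in> used_sn s' k" using F k recv_accept by auto
    qed
    show "\<forall>k\<in>{1..n}-B. \<forall>y. y \<in> delivered s' k \<longrightarrow> n+t < 2*card(saved s' k y)"
    proof (intro ballI allI impI)
      fix k y assume k: "k \<in> {1..n}-B" and y: "y \<in> delivered s' k"
      have DD: "\<forall>k\<in>{1..n}-B. \<forall>x. x \<in> delivered s k \<longrightarrow> n+t < 2*card(saved s k x)"
        using I unfolding inv_def by (elim conjE) assumption
      show "n+t < 2*card(saved s' k y)"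
      proof (cases "k = i \<and> y = x")
        case True
        have fin: "finite S2" using S2sub finite_subset by blast
        show ?thesis
        proof (cases dlv)
          case True
          then show ?thesis using \<open>k = i \<and> y = x\<close> recv_accept by auto
        next
          case False
          then have "y \<in> delivered s k" using y \<open>k = i \<and> y = x\<close> recv_accept by auto
          then have "n+t < 2*card(saved s k y)" using DD k by blast
          moreover have "card (saved s k y) \<le> card S2"
            using card_mono[OF fin S1sub] \<open>k = i \<and> y = x\<close> by auto
          ultimately show ?thesis using \<open>k = i \<and> y = x\<close> sv by auto
        qed
      next
        case False
        then have "y \<in> delivered s k" using y recv_accept by (auto split: if_splits)
        then have "n+t < 2*card(saved s k y)" using DD k by blast
        then show ?thesis using False sv by auto
      qed
    qed
  qed
next
  case (byz_send b k M s s')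
  show ?case unfolding inv_def
  proof (intro conjI)
    show "\<forall>p k M q y. (p,k,M) \<in># net s' \<longrightarrow> q \<in> {1..n}-B \<longrightarrow> Sig q y \<in> sigs_of M \<longrightarrow> y \<in> signed s' q"
      using byz_send by (auto simp: inv_def)
  qed (use byz_send in \<open>auto simp: inv_def\<close>)
next
  case (byz_recv b p M s s')
  show ?case unfolding inv_def
  proof (intro conjI)
    show "\<forall>p k M q y. (p,k,M) \<in># net s' \<longrightarrow> q \<in> {1..n}-B \<longrightarrow> Sig q y \<in> sigs_of M \<longrightarrow> y \<in> signed s' q"
      using byz_recv by (auto simp: inv_def dest: in_diffD)
    show "\<forall>q\<in>{1..n}-B. \<forall>y. Sig q y \<in> byz_known s' \<longrightarrow> y \<in> signed s' q"
      using byz_recv by (auto simp: inv_def)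
  qed (use byz_recv in \<open>auto simp: inv_def\<close>)
qed

lemma inv_reach: "reach n t d B s \<Longrightarrow> inv n t B s"
  by (induction rule: reach.induct) (auto intro: inv_init inv_step)

theorem mainTheorem4:
  fixes n t d :: nat and B :: "nat set" and s :: "'m st"
    and i i1 i2 sn :: nat and m m' :: 'm
  assumes "B \<subseteq> {1..n}" and "card B \<le> t"
    and "n > 3 * t + 2 * d" and "d < n - card B"
    and "reach n t d B s"
    and "i1 \<in> {1..n} - B" and "i2 \<in> {1..n} - B"
    and "(m, sn, i) \<in> delivered s i1" and "(m', sn, i) \<in> delivered s i2"
  shows "m = m'"
proof -
  have I: "inv n t B s" using inv_reach assms(5) .
  define K1 where "K1 = {q \<in> {1..n}. Sig q (m,sn,i) \<in> saved s i1 (m,sn,i)}"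
  define K2 where "K2 = {q \<in> {1..n}. Sig q (m',sn,i) \<in> saved s i2 (m',sn,i)}"
  have e1: "saved s i1 (m,sn,i) = (\<lambda>q. Sig q (m,sn,i)) ` K1"
  proof
    show "saved s i1 (m,sn,i) \<subseteq> (\<lambda>q. Sig q (m,sn,i)) ` K1"
    proof
      fix x assume x: "x \<in> saved s i1 (m,sn,i)"
      have "saved s i1 (m,sn,i) \<subseteq> (\<lambda>q. Sig q (m,sn,i)) ` {1..n}"
        using spec[OF bspec[OF conjunct1[OF I[unfolded inv_def]] assms(6)], of "(m,sn,i)"] .
      then obtain q where "q \<in> {1..n}" "x = Sig q (m,sn,i)" using x by (auto simp del: atLeastAtMost_iff)
      then show "x \<in> (\<lambda>q. Sig q (m,sn,i)) ` K1" using x by (auto simp: K1_def)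
    qed
  qed (auto simp: K1_def)
  have e2: "saved s i2 (m',sn,i) = (\<lambda>q. Sig q (m',sn,i)) ` K2"
  proof
    show "saved s i2 (m',sn,i) \<subseteq> (\<lambda>q. Sig q (m',sn,i)) ` K2"
    proof
      fix x assume x: "x \<in> saved s i2 (m',sn,i)"
      have "saved s i2 (m',sn,i) \<subseteq> (\<lambda>q. Sig q (m',sn,i)) ` {1..n}"
        using spec[OF bspec[OF conjunct1[OF I[unfolded inv_def]] assms(7)], of "(m',sn,i)"] .
      then obtain q where "q \<in> {1..n}" "x = Sig q (m',sn,i)" using x by (auto simp del: atLeastAtMost_iff)
      then show "x \<in> (\<lambda>q. Sig q (m',sn,i)) ` K2" using x by (auto simp: K2_def)
    qed
  qed (auto simp: K2_def)
  have c1: "card (saved s i1 (m,sn,i)) = card K1"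
    unfolding e1 by (rule card_image) (auto simp: inj_on_def)
  have c2: "card (saved s i2 (m',sn,i)) = card K2"
    unfolding e2 by (rule card_image) (auto simp: inj_on_def)
  have D: "\<forall>k\<in>{1..n}-B. \<forall>x. x \<in> delivered s k \<longrightarrow> n+t < 2*card(saved s k x)"
    using I unfolding inv_def by (elim conjE) assumption
  have "n+t < 2*card (saved s i1 (m,sn,i))" using D assms(6,8) by blast
  then have d1: "n+t < 2*card K1" using c1 by simp
  have "n+t < 2*card (saved s i2 (m',sn,i))" using D assms(7,9) by blast
  then have d2: "n+t < 2*card K2" using c2 by simp
  have f1: "finite K1" "finite K2" "K1 \<subseteq> {1..n}" "K2 \<subseteq> {1..n}"
    by (auto simp: K1_def K2_def)
  have "card (K1 \<union> K2) \<le> n" using card_mono[of "{1..n}" "K1 \<union> K2"] f1 by auto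
  moreover have "card (K1 \<union> K2) + card (K1 \<inter> K2) = card K1 + card K2"
    using card_Un_Int[OF f1(1,2)] by simp
  ultimately have "card (K1 \<inter> K2) > t" using d1 d2 by linarith
  then have "card (K1 \<inter> K2) > card B" using assms(2) by linarith
  then have "\<not> (K1 \<inter> K2 \<subseteq> B)"
    using card_mono[of B "K1 \<inter> K2"] assms(1) finite_subset[OF assms(1)] by auto
  then obtain q where q: "q \<in> K1" "q \<in> K2" "q \<notin> B" by blast
  have qc: "q \<in> {1..n} - B" using q f1 by auto
  have "(m,sn,i) \<in> signed s q" using I assms(6) qc q(1) unfolding inv_def K1_def by blast
  moreover have "(m',sn,i) \<in> signed s q" using I assms(7) qc q(2) unfolding inv_def K2_def by blast
  ultimately show ?thesis using I qc unfolding inv_def by blast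
qed

end
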